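(* Let $(X,Y,R)$ be a random triple with $X\in\mathbb{R}^d$, $Y\in\{0,1\}$, $R\in\{0,1\}$, $0<P(R=1)<1$, such that all conditional probabilities $P(R=r\mid Y=y,X=x)$ and $P(Y=y\mid R=r,X=x)$ are well defined and in $(0,1)$. Let $T:\mathbb{R}^d\to\mathbb{R}^k$ be measurable, $\theta^\star=(\alpha_0^\star,\alpha_1^\star,\beta_0^\star,\beta_1^\star)$, $\omega(x,y;\theta^\star)=\exp(\alpha_y^\star+{\beta_y^\star}^\top T(x))$, $\eta_r(x,y;\theta^\star)=P(R=1)/\{P(R=1)+\omega(x,y;\theta^\star)P(R=0)\}$ and $\gamma(1\mid x;\theta^\star)=(\alpha_1^\star-\alpha_0^\star)+(\beta_1^\star-\beta_0^\star)^\top T(x)$. Let $$\gamma(y\mid x)=\log\Big\{\frac{P(R=0\mid Y=y,X=x)\,P(R=1\mid Y=0,X=x)}{P(R=1\mid Y=y,X=x)\,P(R=0\mid Y=0,X=x)}\Big\}.$$ If $\gamma(1\mid x)=\gamma(1\mid x;\theta^\star)$ for all $x$, then for any function $\nu:\mathbb{R}^d\times\{0,1\}\to\mathbb{R}$, $$\frac{\mathbb{E}\big[R\big(\frac{1}{\eta_r(X,Y;\theta^\star)}-1\big)\nu(X,Y)\bigm| X\big]}{\mathbb{E}\big[R\big(\frac{1}{\eta_r(X,Y;\theta^\star)}-1\big)\bigm| X\big]}=\mathbb{E}[\nu(X,Y)\mid X,R=0].$$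
   Context: $R=1$ indicates that $Y$ is observed and $R=0$ that it is missing. *)

theory Defs
  imports "HOL-Probability.Probability"
begin

text \<open>Joint law of (X,Y,R) described through a version p x y r of the conditional
 probability P(Y = y, R = r | X = x) (a regular conditional distribution).\<close>

definition is_cond_pmf ::
  "'a measure \<Rightarrow> ('a \<Rightarrow> 'x::topological_space) \<Rightarrow> ('a \<Rightarrow> nat) \<Rightarrow> ('a \<Rightarrow> nat)
   \<Rightarrow> ('x \<Rightarrow> nat \<Rightarrow> nat \<Rightarrow> real) \<Rightarrow> bool" where
  "is_cond_pmf M X Y R p \<longleftrightarrow>
     (\<forall>y r. (\<lambda>x. p x y r) \<in> borel_measurable borel \<and> (\<forall>x. 0 \<le> p x y r) \<and>
        (\<forall>A \<in> sets borel.
           measure M {w \<in> space M. X w \<in> A \<and> Y w = y \<and> R w = r}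
             = (\<integral>x. indicator A x * p x y r \<partial>(distr M borel X))))"

definition condR :: "('x \<Rightarrow> nat \<Rightarrow> nat \<Rightarrow> real) \<Rightarrow> nat \<Rightarrow> nat \<Rightarrow> 'x \<Rightarrow> real" where
  "condR p r y x = p x y r / (p x y 0 + p x y 1)"

definition condY :: "('x \<Rightarrow> nat \<Rightarrow> nat \<Rightarrow> real) \<Rightarrow> nat \<Rightarrow> nat \<Rightarrow> 'x \<Rightarrow> real" where
  "condY p y r x = p x y r / (p x 0 r + p x 1 r)"

definition gammaR :: "('x \<Rightarrow> nat \<Rightarrow> nat \<Rightarrow> real) \<Rightarrow> nat \<Rightarrow> 'x \<Rightarrow> real" where
  "gammaR p y x = ln ((condR p 0 y x * condR p 1 0 x) / (condR p 1 y x * condR p 0 0 x))"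

definition omega :: "('x \<Rightarrow> real^'k) \<Rightarrow> real \<Rightarrow> real \<Rightarrow> real^'k \<Rightarrow> real^'k \<Rightarrow> 'x \<Rightarrow> nat \<Rightarrow> real" where
  "omega T a0 a1 b0 b1 x y =
     exp ((if y = 1 then a1 else a0) + (if y = 1 then b1 else b0) \<bullet> T x)"

definition eta_r :: "real \<Rightarrow> real \<Rightarrow> ('x \<Rightarrow> real^'k) \<Rightarrow> real \<Rightarrow> real \<Rightarrow> real^'k \<Rightarrow> real^'k
     \<Rightarrow> 'x \<Rightarrow> nat \<Rightarrow> real" where
  "eta_r P1 P0 T a0 a1 b0 b1 x y = P1 / (P1 + omega T a0 a1 b0 b1 x y * P0)"

definition gamma_par :: "('x \<Rightarrow> real^'k) \<Rightarrow> real \<Rightarrow> real \<Rightarrow> real^'k \<Rightarrow> real^'k \<Rightarrow> 'x \<Rightarrow> real" where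
  "gamma_par T a0 a1 b0 b1 x = (a1 - a0) + (b1 - b0) \<bullet> T x"

end

theory Submission
  imports Defs
begin

lemma p_integrable:
  assumes P: "prob_space M" and Xm: "X \<in> borel_measurable M"
    and Ym: "Y \<in> measurable M (count_space UNIV)" and Rm: "R \<in> measurable M (count_space UNIV)"
    and cp: "is_cond_pmf M X Y R p"
  shows "integrable (distr M borel X) (\<lambda>x. p x y r)"
proof -
  let ?Q = "distr M borel X"
  interpret Q: prob_space ?Q using P Xm by (simp add: prob_space.prob_space_distr)
  have pm[measurable]: "(\<lambda>x. p x y r) \<in> borel_measurable borel" and pn: "\<And>x. 0 \<le> p x y r"
    and peq: "\<And>A. A \<in> sets borel \<Longrightarrow> measure M {w \<in> space M. X w \<in> A \<and> Y w = y \<and> R w = r}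
             = (\<integral>x. indicator A x * p x y r \<partial>?Q)"
    using cp unfolding is_cond_pmf_def by auto
  define f where "f = (\<lambda>(n::nat) x. ennreal (indicator {x. p x y r \<le> real n} x * p x y r))"
  have inc: "incseq f"
    unfolding f_def incseq_def le_fun_def
    by (auto intro!: ennreal_leI simp: indicator_def pn)
  have fm: "\<And>i. f i \<in> borel_measurable ?Q" unfolding f_def by measurable
  have sup: "(SUP n. f n x) = ennreal (p x y r)" for x
  proof (rule antisym)
    show "(SUP n. f n x) \<le> ennreal (p x y r)"
      by (rule SUP_least) (auto simp: f_def indicator_def pn)
    obtain n :: nat where "p x y r \<le> real n" using real_arch_simple by blast
    then have "f n x = ennreal (p x y r)" by (simp add: f_def)
    then show "ennreal (p x y r) \<le> (SUP n. f n x)" by (metis SUP_upper UNIV_I)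
  qed
  have bnd: "integral\<^sup>N ?Q (f n) \<le> 1" for n
  proof -
    have ii: "integrable ?Q (\<lambda>x. indicator {x. p x y r \<le> real n} x * p x y r)"
      by (rule Q.integrable_const_bound[where B="real n"]) (auto simp: indicator_def pn)
    have "integral\<^sup>N ?Q (f n) = ennreal (\<integral>x. indicator {x. p x y r \<le> real n} x * p x y r \<partial>?Q)"
      unfolding f_def by (rule nn_integral_eq_integral[OF ii]) (auto simp: pn)
    also have "\<dots> = ennreal (measure M {w \<in> space M. X w \<in> {x. p x y r \<le> real n} \<and> Y w = y \<and> R w = r})"
      by (subst peq) auto
    also have "\<dots> \<le> 1" using prob_space.prob_le_1[OF P] by simp
    finally show ?thesis .
  qed
  have "(\<integral>\<^sup>+x. ennreal (p x y r) \<partial>?Q) = (SUP n. integral\<^sup>N ?Q (f n))"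
    using nn_integral_monotone_convergence_SUP[OF inc fm] sup by simp
  also have "\<dots> \<le> 1" by (rule SUP_least) (rule bnd)
  finally have "(\<integral>\<^sup>+x. ennreal (p x y r) \<partial>?Q) < \<infinity>" by (simp add: le_less_trans)
  then show ?thesis by (intro integrableI_nonneg) (auto simp: pn)
qed

lemma transfer:
  assumes P: "prob_space M" and Xm[measurable]: "X \<in> borel_measurable M"
    and Ym[measurable]: "Y \<in> measurable M (count_space UNIV)" and Rm[measurable]: "R \<in> measurable M (count_space UNIV)"
    and cp: "is_cond_pmf M X Y R p"
    and phi[measurable]: "\<phi> \<in> borel_measurable borel"
    and int: "integrable M (\<lambda>w. indicator {w\<in>space M. Y w = y \<and> R w = r} w * \<phi> (X w))"
  shows "integrable (distr M borel X) (\<lambda>x. p x y r * \<phi> x)"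
    "(\<integral>w. indicator {w\<in>space M. Y w = y \<and> R w = r} w * \<phi> (X w) \<partial>M) = (\<integral>x. p x y r * \<phi> x \<partial>distr M borel X)"
proof -
  let ?Q = "distr M borel X"
  let ?S = "{w\<in>space M. Y w = y \<and> R w = r}"
  interpret Q: prob_space ?Q using P Xm by (simp add: prob_space.prob_space_distr)
  interpret M: prob_space M using P .
  have pm[measurable]: "(\<lambda>x. p x y r) \<in> borel_measurable borel" and pn: "\<And>x. 0 \<le> p x y r"
    and peq: "\<And>A. A \<in> sets borel \<Longrightarrow> measure M {w \<in> space M. X w \<in> A \<and> Y w = y \<and> R w = r}
             = (\<integral>x. indicator A x * p x y r \<partial>?Q)"
    using cp unfolding is_cond_pmf_def by auto
  have ip: "integrable ?Q (\<lambda>x. p x y r)" by (rule p_integrable[OF P Xm Ym Rm cp])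
  have Ssets[measurable]: "?S \<in> sets M" by measurable
  have eq: "distr (density M (\<lambda>w. ennreal (indicator ?S w))) borel X = density ?Q (\<lambda>x. ennreal (p x y r))"
  proof (rule measure_eqI)
    show "sets (distr (density M (\<lambda>w. ennreal (indicator ?S w))) borel X) = sets (density ?Q (\<lambda>x. ennreal (p x y r)))"
      by simp
    fix A assume A: "A \<in> sets (distr (density M (\<lambda>w. ennreal (indicator ?S w))) borel X)"
    then have Ab[measurable]: "A \<in> sets borel" by simp
    have "emeasure (distr (density M (\<lambda>w. ennreal (indicator ?S w))) borel X) A
        = emeasure (density M (indicator ?S)) (X -` A \<inter> space M)"
      by (subst emeasure_distr) (auto simp: ennreal_indicator)
    also have "\<dots> = emeasure M (?S \<inter> (X -` A \<inter> space M))"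
      by (rule emeasure_restricted) auto
    also have "?S \<inter> (X -` A \<inter> space M) = {w \<in> space M. X w \<in> A \<and> Y w = y \<and> R w = r}" by auto
    also have "emeasure M \<dots> = ennreal (measure M {w \<in> space M. X w \<in> A \<and> Y w = y \<and> R w = r})"
      by (rule M.emeasure_eq_measure)
    also have "\<dots> = ennreal (\<integral>x. indicator A x * p x y r \<partial>?Q)" using peq[OF Ab] by simp
    also have "\<dots> = (\<integral>\<^sup>+x. ennreal (indicator A x * p x y r) \<partial>?Q)"
    proof -
      have "integrable ?Q (\<lambda>x. indicator A x *\<^sub>R p x y r)"
        by (rule integrable_mult_indicator) (use ip Ab in auto)
      then show ?thesis by (intro nn_integral_eq_integral[symmetric]) (auto simp: pn)
    qed
    also have "\<dots> = emeasure (density ?Q (\<lambda>x. ennreal (p x y r))) A"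
      by (subst emeasure_density) (auto simp: ennreal_mult' ennreal_indicator mult.commute)
    finally show "emeasure (distr (density M (\<lambda>w. ennreal (indicator ?S w))) borel X) A = emeasure (density ?Q (\<lambda>x. ennreal (p x y r))) A" .
  qed
  have i1: "integrable (distr (density M (\<lambda>w. ennreal (indicator ?S w))) borel X) \<phi>"
    by (subst integrable_distr_eq) (auto simp: integrable_density int)
  then show "integrable ?Q (\<lambda>x. p x y r * \<phi> x)"
    unfolding eq by (subst (asm) integrable_density) (auto simp: pn)
  have "(\<integral>w. indicator ?S w * \<phi> (X w) \<partial>M) = (\<integral>w. \<phi> (X w) \<partial>density M (\<lambda>w. ennreal (indicator ?S w)))"
    by (subst integral_density) auto
  also have "\<dots> = (\<integral>x. \<phi> x \<partial>distr (density M (\<lambda>w. ennreal (indicator ?S w))) borel X)"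
    by (subst integral_distr) auto
  also have "\<dots> = (\<integral>x. p x y r * \<phi> x \<partial>?Q)"
    unfolding eq by (subst integral_density) (auto simp: pn)
  finally show "(\<integral>w. indicator ?S w * \<phi> (X w) \<partial>M) = (\<integral>x. p x y r * \<phi> x \<partial>?Q)" .
qed

lemma condexp:
  assumes P: "prob_space M" and Xm[measurable]: "X \<in> borel_measurable M"
    and Ym[measurable]: "Y \<in> measurable M (count_space UNIV)" and Rm[measurable]: "R \<in> measurable M (count_space UNIV)"
    and vals: "\<forall>w \<in> space M. Y w \<in> {0, 1} \<and> R w \<in> {0, 1}"
    and cp: "is_cond_pmf M X Y R p"
    and hm: "\<forall>y \<in> {0,1}. (\<lambda>x. h x y) \<in> borel_measurable borel"
    and int: "integrable M (\<lambda>w. real (R w) * h (X w) (Y w))"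
  shows "AE w in M. real_cond_exp M (vimage_algebra (space M) X borel) (\<lambda>w. real (R w) * h (X w) (Y w)) w
     = (\<Sum>y\<in>{0,1}. p (X w) y 1 * h (X w) y)"
proof -
  let ?F = "vimage_algebra (space M) X borel"
  let ?Q = "distr M borel X"
  let ?f = "\<lambda>w. real (R w) * h (X w) (Y w)"
  let ?g = "\<lambda>x. p x 0 1 * h x 0 + p x 1 1 * h x 1"
  interpret M: prob_space M using P .
  have Xf: "X \<in> space M \<rightarrow> space borel" by simp
  have sub: "subalgebra M ?F"
    unfolding subalgebra_def
    using Xm by (auto simp: sets_vimage_algebra2[OF Xf])
  interpret FS: finite_measure_subalgebra M ?F
    by unfold_locales (rule sub)
  have h0[measurable]: "(\<lambda>x. h x 0) \<in> borel_measurable borel" and h1[measurable]: "(\<lambda>x. h x 1) \<in> borel_measurable borel"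
    using hm by auto
  have pm[measurable]: "\<And>y r. (\<lambda>x. p x y r) \<in> borel_measurable borel"
    using cp unfolding is_cond_pmf_def by auto
  define \<psi> where "\<psi> = (\<lambda>y B w. indicator {w\<in>space M. Y w = y \<and> R w = 1} w * (indicator B (X w) * h (X w) y))"
  have piece: "integrable ?Q (\<lambda>x. p x y 1 * (indicator B x * h x y)) \<and>
      (\<integral>w. \<psi> y B w \<partial>M) = (\<integral>x. p x y 1 * (indicator B x * h x y) \<partial>?Q)
      \<and> integrable M (\<psi> y B)"
    if B[measurable]: "B \<in> sets borel" and y: "y \<in> {0,1}" for B y
  proof -
    have hy[measurable]: "(\<lambda>x. h x y) \<in> borel_measurable borel" using hm y by auto
    have Cs: "X -` B \<inter> space M \<inter> {w. Y w = y} \<in> sets M"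
    proof -
      have "X -` B \<inter> space M \<inter> {w. Y w = y} = {w \<in> space M. X w \<in> B \<and> Y w = y}" by auto
      also have "\<dots> \<in> sets M" by measurable
      finally show ?thesis .
    qed
    have I1: "integrable M (\<lambda>w. indicator (X -` B \<inter> space M \<inter> {w. Y w = y}) w *\<^sub>R ?f w)"
      by (rule integrable_mult_indicator[OF Cs int])
    have E1: "\<And>w. w \<in> space M \<Longrightarrow> indicator (X -` B \<inter> space M \<inter> {w. Y w = y}) w *\<^sub>R ?f w = \<psi> y B w"
      using vals unfolding \<psi>_def by (auto simp: indicator_def)
    have "integrable M (\<lambda>w. indicator (X -` B \<inter> space M \<inter> {w. Y w = y}) w *\<^sub>R ?f w) = integrable M (\<psi> y B)"
      by (rule Bochner_Integration.integrable_cong[OF refl E1])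
    with I1 have iM: "integrable M (\<psi> y B)" by simp
    then have iM': "integrable M (\<lambda>w. indicator {w\<in>space M. Y w = y \<and> R w = 1} w * (\<lambda>x. indicator B x * h x y) (X w))"
      unfolding \<psi>_def by simp
    show ?thesis
      using transfer[OF P Xm Ym Rm cp _ iM'] iM unfolding \<psi>_def by simp
  qed
  have sumeq: "indicator (X -` B \<inter> space M) w * ?f w = \<psi> 0 B w + \<psi> 1 B w" if "w \<in> space M" for B w
    using vals that unfolding \<psi>_def by (auto simp: indicator_def)
  have fm[measurable]: "?f \<in> borel_measurable M" using int by auto
  have gb: "?g \<in> borel_measurable borel" by measurable
  have gQ: "integrable ?Q ?g"
    using piece[of UNIV 0] piece[of UNIV 1] by (intro Bochner_Integration.integrable_add) auto
  have gM: "integrable M (\<lambda>w. ?g (X w))"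
    using gQ integrable_distr_eq[OF Xm gb] by simp
  have gF: "(\<lambda>w. ?g (X w)) \<in> borel_measurable ?F"
    by (rule measurable_compose[OF measurable_vimage_algebra1[OF Xf] gb])
  have "AE w in M. real_cond_exp M ?F ?f w = ?g (X w)"
  proof (rule FS.real_cond_exp_charact[OF _ int gM gF])
    fix A assume "A \<in> sets ?F"
    then obtain B where B[measurable]: "B \<in> sets borel" and AB: "A = X -` B \<inter> space M"
      by (auto simp: sets_vimage_algebra2[OF Xf])
    have P0: "integrable ?Q (\<lambda>x. p x 0 1 * (indicator B x * h x 0))"
      "(\<integral>w. \<psi> 0 B w \<partial>M) = (\<integral>x. p x 0 1 * (indicator B x * h x 0) \<partial>?Q)"
      "integrable M (\<psi> 0 B)" using piece[OF B, of 0] by simp_all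
    have P1: "integrable ?Q (\<lambda>x. p x 1 1 * (indicator B x * h x 1))"
      "(\<integral>w. \<psi> 1 B w \<partial>M) = (\<integral>x. p x 1 1 * (indicator B x * h x 1) \<partial>?Q)"
      "integrable M (\<psi> 1 B)" using piece[OF B, of 1] by simp_all
    have "(\<integral>w\<in>A. ?f w \<partial>M) = (\<integral>w. \<psi> 0 B w + \<psi> 1 B w \<partial>M)"
      unfolding AB set_lebesgue_integral_def by (rule Bochner_Integration.integral_cong[OF refl]) (simp add: sumeq)
    also have "\<dots> = (\<integral>w. \<psi> 0 B w \<partial>M) + (\<integral>w. \<psi> 1 B w \<partial>M)"
      by (rule Bochner_Integration.integral_add[OF P0(3) P1(3)])
    also have "\<dots> = (\<integral>x. p x 0 1 * (indicator B x * h x 0) \<partial>?Q) + (\<integral>x. p x 1 1 * (indicator B x * h x 1) \<partial>?Q)"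
      by (simp only: P0(2) P1(2))
    also have "\<dots> = (\<integral>x. p x 0 1 * (indicator B x * h x 0) + p x 1 1 * (indicator B x * h x 1) \<partial>?Q)"
      by (rule Bochner_Integration.integral_add[OF P0(1) P1(1), symmetric])
    also have "\<dots> = (\<integral>x. indicator B x * ?g x \<partial>?Q)"
      by (rule Bochner_Integration.integral_cong[OF refl]) (simp add: distrib_left)
    also have "\<dots> = (\<integral>w. indicator B (X w) * ?g (X w) \<partial>M)"
      by (rule integral_distr[OF Xm]) (rule borel_measurable_times[OF borel_measurable_indicator[OF B] gb])
    also have "\<dots> = (\<integral>w\<in>A. ?g (X w) \<partial>M)"
      unfolding AB set_lebesgue_integral_def by (rule Bochner_Integration.integral_cong[OF refl]) (auto simp: indicator_def)
    finally show "(\<integral>w\<in>A. ?f w \<partial>M) = (\<integral>w\<in>A. ?g (X w) \<partial>M)" .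
  qed
  then show ?thesis by simp
qed


lemma alg:
  fixes q0 q1 s0 s1 w0 w1 c n0 n1 :: real
  assumes pos: "q0 > 0" "q1 > 0" "s0 > 0" "s1 > 0" "w0 > 0" "w1 > 0" "c > 0"
    and rel: "s1 * q0 * w0 = w1 * q1 * s0"
  shows "(q0 * (c * w0 * n0) + q1 * (c * w1 * n1)) / (q0 * (c * w0) + q1 * (c * w1))
       = s0 / (s0 + s1) * n0 + s1 / (s0 + s1) * n1"
proof -
  define k where "k = q0 * w0 / s0"
  have k0: "k > 0" using pos unfolding k_def by simp
  have e0: "q0 * w0 = k * s0" using pos unfolding k_def by simp
  have e1: "q1 * w1 = k * s1" using pos rel unfolding k_def by (simp add: field_simps)
  have "q0 * (c * w0 * n0) + q1 * (c * w1 * n1) = c * k * (s0 * n0 + s1 * n1)"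
    using e0 e1 by (metis (no_types, lifting) distrib_left mult.assoc mult.left_commute)
  moreover have "q0 * (c * w0) + q1 * (c * w1) = c * k * (s0 + s1)"
    using e0 e1 by (metis (no_types, lifting) distrib_left mult.assoc mult.left_commute)
  ultimately have "(q0 * (c * w0 * n0) + q1 * (c * w1 * n1)) / (q0 * (c * w0) + q1 * (c * w1))
      = (c * k * (s0 * n0 + s1 * n1)) / (c * k * (s0 + s1))" by simp
  also have "\<dots> = (s0 * n0 + s1 * n1) / (s0 + s1)" using pos k0 by simp
  also have "\<dots> = s0 / (s0 + s1) * n0 + s1 / (s0 + s1) * n1" by (simp add: add_divide_distrib)
  finally show ?thesis .
qed

lemma qlem:
  fixes a b c d S0 S1 :: real
  assumes "S0 \<noteq> 0" "S1 \<noteq> 0"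
  shows "(a / S1 * (b / S0)) / (c / S1 * (d / S0)) = a * b / (c * d)"
  using assms by (simp add: divide_simps)

theorem lemma11:
  fixes M :: "'a measure"
    and X :: "'a \<Rightarrow> real^'d" and Y R :: "'a \<Rightarrow> nat"
    and p :: "real^'d \<Rightarrow> nat \<Rightarrow> nat \<Rightarrow> real"
    and T :: "real^'d \<Rightarrow> real^'k"
    and a0 a1 :: real and b0 b1 :: "real^'k"
    and \<nu> :: "real^'d \<Rightarrow> nat \<Rightarrow> real"
  assumes "prob_space M"
    and "X \<in> borel_measurable M"
    and "Y \<in> measurable M (count_space UNIV)" and "R \<in> measurable M (count_space UNIV)"
    and "\<forall>w \<in> space M. Y w \<in> {0, 1} \<and> R w \<in> {0, 1}"
    and "0 < measure M {w \<in> space M. R w = 1}" and "measure M {w \<in> space M. R w = 1} < 1"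
    and "is_cond_pmf M X Y R p"
    and "\<forall>x. \<forall>y \<in> {0,1}. \<forall>r \<in> {0,1}. 0 < condR p r y x \<and> condR p r y x < 1"
    and "\<forall>x. \<forall>y \<in> {0,1}. \<forall>r \<in> {0,1}. 0 < condY p y r x \<and> condY p y r x < 1"
    and "T \<in> borel_measurable borel"
    and "\<forall>x. gammaR p 1 x = gamma_par T a0 a1 b0 b1 x"
    and "\<forall>y \<in> {0,1}. (\<lambda>x. \<nu> x y) \<in> borel_measurable borel"
    and "integrable M (\<lambda>w. real (R w) *
           (1 / eta_r (measure M {w \<in> space M. R w = 1}) (measure M {w \<in> space M. R w = 0})
                  T a0 a1 b0 b1 (X w) (Y w) - 1) * \<nu> (X w) (Y w))"
    and "integrable M (\<lambda>w. real (R w) *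
           (1 / eta_r (measure M {w \<in> space M. R w = 1}) (measure M {w \<in> space M. R w = 0})
                  T a0 a1 b0 b1 (X w) (Y w) - 1))"
  shows "AE w in M.
     real_cond_exp M (vimage_algebra (space M) X borel)
        (\<lambda>w. real (R w) *
           (1 / eta_r (measure M {w \<in> space M. R w = 1}) (measure M {w \<in> space M. R w = 0})
                  T a0 a1 b0 b1 (X w) (Y w) - 1) * \<nu> (X w) (Y w)) w
     / real_cond_exp M (vimage_algebra (space M) X borel)
        (\<lambda>w. real (R w) *
           (1 / eta_r (measure M {w \<in> space M. R w = 1}) (measure M {w \<in> space M. R w = 0})
                  T a0 a1 b0 b1 (X w) (Y w) - 1)) w
     = (\<Sum>y \<in> {0,1}. condY p y 0 (X w) * \<nu> (X w) y)"
proof -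
  note P = assms(1) and Xm = assms(2) and Ym = assms(3) and Rm = assms(4) and vals = assms(5)
    and cp = assms(8)
  interpret M: prob_space M using P .
  define P1 where "P1 = measure M {w \<in> space M. R w = 1}"
  define P0 where "P0 = measure M {w \<in> space M. R w = 0}"
  have P1pos: "P1 > 0" using assms(6) unfolding P1_def .
  have "{w \<in> space M. R w = 0} = space M - {w \<in> space M. R w = 1}" using vals by auto
  moreover have "{w \<in> space M. R w = 1} \<in> sets M" using Rm by measurable
  ultimately have "P0 = 1 - P1" unfolding P0_def P1_def by (simp add: M.prob_compl)
  then have P0pos: "P0 > 0" using assms(7) unfolding P1_def by simp
  define E where "E = (\<lambda>x y. 1 / eta_r P1 P0 T a0 a1 b0 b1 x y - 1)"
  have Eeq: "E x y = P0 / P1 * omega T a0 a1 b0 b1 x y" for x y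
  proof -
    have "omega T a0 a1 b0 b1 x y > 0" unfolding omega_def by simp
    then have "P1 + omega T a0 a1 b0 b1 x y * P0 > 0" using P1pos P0pos by (simp add: add_pos_pos)
    then show ?thesis unfolding E_def eta_r_def using P1pos by (simp add: field_simps)
  qed
  have Tm[measurable]: "T \<in> borel_measurable borel" using assms(11) .
  have om[measurable]: "(\<lambda>x. omega T a0 a1 b0 b1 x y) \<in> borel_measurable borel" for y
    unfolding omega_def by measurable
  have Em[measurable]: "(\<lambda>x. E x y) \<in> borel_measurable borel" for y
    unfolding Eeq by measurable
  have num: "\<forall>y \<in> {0,1}. (\<lambda>x. E x y * \<nu> x y) \<in> borel_measurable borel"
    using assms(13) by auto
  have den: "\<forall>y \<in> {0,1}. (\<lambda>x. E x y) \<in> borel_measurable borel"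
    by auto
  have f1: "(\<lambda>w. real (R w) * (E (X w) (Y w) * \<nu> (X w) (Y w))) = (\<lambda>w. real (R w) *
           (1 / eta_r (measure M {w \<in> space M. R w = 1}) (measure M {w \<in> space M. R w = 0})
                  T a0 a1 b0 b1 (X w) (Y w) - 1) * \<nu> (X w) (Y w))"
    unfolding E_def P1_def P0_def by (simp add: mult.assoc)
  have f2: "(\<lambda>w. real (R w) * E (X w) (Y w)) = (\<lambda>w. real (R w) *
           (1 / eta_r (measure M {w \<in> space M. R w = 1}) (measure M {w \<in> space M. R w = 0})
                  T a0 a1 b0 b1 (X w) (Y w) - 1))"
    unfolding E_def P1_def P0_def by simp
  have A1: "AE w in M. real_cond_exp M (vimage_algebra (space M) X borel) (\<lambda>w. real (R w) * (E (X w) (Y w) * \<nu> (X w) (Y w))) w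
     = (\<Sum>y\<in>{0,1}. p (X w) y 1 * (E (X w) y * \<nu> (X w) y))"
    by (rule condexp[OF P Xm Ym Rm vals cp num]) (use assms(14) f1 in simp)
  have A2: "AE w in M. real_cond_exp M (vimage_algebra (space M) X borel) (\<lambda>w. real (R w) * E (X w) (Y w)) w
     = (\<Sum>y\<in>{0,1}. p (X w) y 1 * E (X w) y)"
    by (rule condexp[OF P Xm Ym Rm vals cp den]) (use assms(15) f2 in simp)
  have pnn: "\<And>x y r. 0 \<le> p x y r" using cp unfolding is_cond_pmf_def by auto
  have ppos: "p x y r > 0" if "y \<in> {0,1}" "r \<in> {0,1}" for x y r
  proof -
    have "0 < condR p r y x" using assms(9) that by blast
    then have "p x y r \<noteq> 0" unfolding condR_def by auto
    with pnn[of x y r] show ?thesis by simp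
  qed
  have pw: "(\<Sum>y\<in>{0,1}. p x y 1 * (E x y * \<nu> x y)) / (\<Sum>y\<in>{0,1}. p x y 1 * E x y)
      = (\<Sum>y \<in> {0,1}. condY p y 0 x * \<nu> x y)" for x
  proof -
    let ?w0 = "omega T a0 a1 b0 b1 x 0" and ?w1 = "omega T a0 a1 b0 b1 x 1"
    have w0: "?w0 > 0" and w1: "?w1 > 0" unfolding omega_def by simp_all
    have q: "p x 0 0 > 0" "p x 0 1 > 0" "p x 1 0 > 0" "p x 1 1 > 0" using ppos by auto
    have Qdef: "(condR p 0 1 x * condR p 1 0 x) / (condR p 1 1 x * condR p 0 0 x)
        = p x 1 0 * p x 0 1 / (p x 1 1 * p x 0 0)"
    proof -
      have "p x 1 0 + p x 1 1 > 0" "p x 0 0 + p x 0 1 > 0" using q by auto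
      then show ?thesis unfolding condR_def by (intro qlem) auto
    qed
    have Qpos: "p x 1 0 * p x 0 1 / (p x 1 1 * p x 0 0) > 0" using q by simp
    have "ln (p x 1 0 * p x 0 1 / (p x 1 1 * p x 0 0)) = gamma_par T a0 a1 b0 b1 x"
      using assms(12) Qdef unfolding gammaR_def by metis
    then have "p x 1 0 * p x 0 1 / (p x 1 1 * p x 0 0) = exp (gamma_par T a0 a1 b0 b1 x)"
      using Qpos by (metis exp_ln)
    also have "\<dots> = ?w1 / ?w0"
      unfolding gamma_par_def omega_def by (simp add: exp_diff[symmetric] inner_diff_left algebra_simps)
    finally have "p x 1 0 * p x 0 1 / (p x 1 1 * p x 0 0) = ?w1 / ?w0" .
    then have rel: "p x 1 0 * p x 0 1 * ?w0 = ?w1 * p x 1 1 * p x 0 0"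
      using q w0 by (simp add: field_simps)
    have c: "P0 / P1 > 0" using P0pos P1pos by simp
    have "(\<Sum>y\<in>{0,1}. p x y 1 * (E x y * \<nu> x y)) / (\<Sum>y\<in>{0,1}. p x y 1 * E x y)
        = (p x 0 1 * (P0 / P1 * ?w0 * \<nu> x 0) + p x 1 1 * (P0 / P1 * ?w1 * \<nu> x 1)) /
          (p x 0 1 * (P0 / P1 * ?w0) + p x 1 1 * (P0 / P1 * ?w1))"
      by (simp add: Eeq)
    also have "\<dots> = p x 0 0 / (p x 0 0 + p x 1 0) * \<nu> x 0 + p x 1 0 / (p x 0 0 + p x 1 0) * \<nu> x 1"
      by (rule alg) (use q w0 w1 c rel in auto)
    also have "\<dots> = (\<Sum>y \<in> {0,1}. condY p y 0 x * \<nu> x y)"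
      by (simp add: condY_def)
    finally show ?thesis .
  qed
  from A1 A2 show ?thesis
  proof eventually_elim
    case (elim w)
    show ?case using elim f1 f2 pw[of "X w"] by (simp add: P1_def P0_def)
  qed
qed

end
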